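(* Let $M$ be a duplicial module in a pre-additive category $\mathcal A$. Then for every $n\ge0$, $$\pi_n=p_n\circ T_n=T_n\circ p_n .$$ In particular, if $M$ is cyclic ($T_n=1$ for all $n$), then $\pi_n=p_n$.
   Context: Let $\mathcal A$ be a pre-additive category. Let $\Lambda_\infty$ be the category with objects $[n]$, $n\ge0$, where $\Lambda_\infty([m],[n])$ is the set of weakly monotone maps $f:\mathbb Z\to\mathbb Z$ with $f(j+m+1)=f(j)+n+1$ for all $j$ (determined by values on $\{0,\dots,m\}$). Let $\Lambda_+\subset\Lambda_\infty$ be the subcategory of those $f$ with $f(0)\ge0$, and $\Delta\subset\Lambda_+$ those with also $f(m)\le n$. Define $\varepsilon^n_i:[n-1]\to[n]$ ($n\ge1$, $0\le i\le n$) by $\varepsilon^n_i(j)=j$ for $0\le j<i$, $j+1$ for $i\le j\le n-1$; $\eta^n_i:[n+1]\to[n]$ ($0\le i\le n+1$) by $\eta^n_i(j)=j$ for $0\le j\le i$, $j-1$ for $i<j\le n+1$; $\tau_n:[n]\to[n]$, $\tau_n(j)=j+1$ ($=\eta^n_{n+1}\varepsilon^{n+1}_0$). A duplicial module is a functor $M:\Lambda_+^{op}\to\mathcal A$. Write $M_n=M([n])$, $\partial_{n,i}=M(\varepsilon^n_i):M_n\to M_{n-1}$, $s_{n,i}=M(\eta^n_i):M_n\to M_{n+1}$, $t_n=M(\tau_n)=\partial_{n+1,0}s_{n,n+1}$, $T_n=t_n^{n+1}$; $M$ is cyclic if $T_n=1$ for all $n$. Convention: $M_{-1}=0$, maps to/from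 it are $0$. Define $p_n=(1-s_{n-1,0}\partial_{n,1})(1-s_{n-1,1}\partial_{n,2})\cdots(1-s_{n-1,n-1}\partial_{n,n})$ ($p_0=1$), the Karoubi operator $\kappa_n=(-1)^n(\partial_{n+1,0}s_{n,n+1}-s_{n-1,n}\partial_{n,0})$ and the Dwyer–Kan operator $\pi_n=(-1)^n\partial_{n+1,0}\kappa_{n+1}^n s_{n,n+1}$. *)

theory Defs
  imports Main
begin

text \<open>A category with morphisms of type 'm and objects of type 'o; hom C a b is the
set of morphisms a -> b; cmp C g f is the composite g o f (f first).\<close>

record ('o, 'm) preadd_cat =
  hom :: "'o \<Rightarrow> 'o \<Rightarrow> 'm set"
  cmp :: "'m \<Rightarrow> 'm \<Rightarrow> 'm"
  idm :: "'o \<Rightarrow> 'm"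
  zer :: "'o \<Rightarrow> 'o \<Rightarrow> 'm"
  pls :: "'m \<Rightarrow> 'm \<Rightarrow> 'm"
  neg :: "'m \<Rightarrow> 'm"

definition preadditive :: "('o, 'm) preadd_cat \<Rightarrow> bool" where
  "preadditive C \<longleftrightarrow>
     (\<forall>a b c f g. f \<in> hom C a b \<and> g \<in> hom C b c \<longrightarrow> cmp C g f \<in> hom C a c) \<and>
     (\<forall>a b c d f g h. f \<in> hom C a b \<and> g \<in> hom C b c \<and> h \<in> hom C c d \<longrightarrow>
        cmp C h (cmp C g f) = cmp C (cmp C h g) f) \<and>
     (\<forall>a. idm C a \<in> hom C a a) \<and>
     (\<forall>a b f. f \<in> hom C a b \<longrightarrow> cmp C (idm C b) f = f \<and> cmp C f (idm C a) = f) \<and>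
     (\<forall>a b. zer C a b \<in> hom C a b) \<and>
     (\<forall>a b f g. f \<in> hom C a b \<and> g \<in> hom C a b \<longrightarrow>
        pls C f g \<in> hom C a b \<and> pls C f g = pls C g f) \<and>
     (\<forall>a b f g h. f \<in> hom C a b \<and> g \<in> hom C a b \<and> h \<in> hom C a b \<longrightarrow>
        pls C (pls C f g) h = pls C f (pls C g h)) \<and>
     (\<forall>a b f. f \<in> hom C a b \<longrightarrow>
        pls C f (zer C a b) = f \<and> neg C f \<in> hom C a b \<and> pls C f (neg C f) = zer C a b) \<and>
     (\<forall>a b c f g g'. f \<in> hom C a b \<and> g \<in> hom C b c \<and> g' \<in> hom C b c \<longrightarrow>
        cmp C (pls C g g') f = pls C (cmp C g f) (cmp C g' f)) \<and>
     (\<forall>a b c f f' g. f \<in> hom C a b \<and> f' \<in> hom C a b \<and> g \<in> hom C b c \<longrightarrow>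
        cmp C g (pls C f f') = pls C (cmp C g f) (cmp C g f'))"

definition mns :: "('o, 'm) preadd_cat \<Rightarrow> 'm \<Rightarrow> 'm \<Rightarrow> 'm" where
  "mns C f g = pls C f (neg C g)"

definition sgnm :: "('o, 'm) preadd_cat \<Rightarrow> nat \<Rightarrow> 'm \<Rightarrow> 'm" where
  "sgnm C n f = (if even n then f else neg C f)"

definition mpow :: "('o, 'm) preadd_cat \<Rightarrow> 'o \<Rightarrow> nat \<Rightarrow> 'm \<Rightarrow> 'm" where
  "mpow C a k f = (cmp C f ^^ k) (idm C a)"

text \<open>Morphisms [m] -> [n] of Lambda_infinity: weakly monotone f : Z -> Z with
f(j+m+1) = f(j)+n+1; Lambda_+ additionally requires f(0) >= 0.
Composition is composition of functions.\<close>

definition lam_inf :: "nat \<Rightarrow> nat \<Rightarrow> (int \<Rightarrow> int) \<Rightarrow> bool" where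
  "lam_inf m n f \<longleftrightarrow> mono f \<and> (\<forall>j. f (j + int m + 1) = f j + int n + 1)"

definition lam_plus :: "nat \<Rightarrow> nat \<Rightarrow> (int \<Rightarrow> int) \<Rightarrow> bool" where
  "lam_plus m n f \<longleftrightarrow> lam_inf m n f \<and> f 0 \<ge> 0"

text \<open>The unique extension to Z of a map given on {0..m}.\<close>
definition per_ext :: "nat \<Rightarrow> nat \<Rightarrow> (int \<Rightarrow> int) \<Rightarrow> int \<Rightarrow> int" where
  "per_ext m n g j = (j div (int m + 1)) * (int n + 1) + g (j mod (int m + 1))"

definition eps :: "nat \<Rightarrow> nat \<Rightarrow> int \<Rightarrow> int" where
  "eps n i = per_ext (n - 1) n (\<lambda>j. if j < int i then j else j + 1)"

definition eta :: "nat \<Rightarrow> nat \<Rightarrow> int \<Rightarrow> int" where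
  "eta n i = per_ext (n + 1) n (\<lambda>j. if j \<le> int i then j else j - 1)"

definition tau :: "nat \<Rightarrow> int \<Rightarrow> int" where
  "tau n = per_ext n n (\<lambda>j. j + 1)"

text \<open>A duplicial module is a functor M : Lambda_+^op -> C, given by its object map
Ob ([n] |-> M_n) and its morphism map Mor: for f : [m] -> [n] in Lambda_+,
Mor m n f : M_n -> M_m.\<close>

definition duplicial ::
  "('o, 'm) preadd_cat \<Rightarrow> (nat \<Rightarrow> 'o) \<Rightarrow> (nat \<Rightarrow> nat \<Rightarrow> (int \<Rightarrow> int) \<Rightarrow> 'm) \<Rightarrow> bool" where
  "duplicial C Ob Mor \<longleftrightarrow>
     (\<forall>m n f. lam_plus m n f \<longrightarrow> Mor m n f \<in> hom C (Ob n) (Ob m)) \<and>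
     (\<forall>m. Mor m m id = idm C (Ob m)) \<and>
     (\<forall>m n k f g. lam_plus m n f \<and> lam_plus n k g \<longrightarrow>
        Mor m k (g \<circ> f) = cmp C (Mor m n f) (Mor n k g))"

context
  fixes C :: "('o, 'm) preadd_cat"
    and Ob :: "nat \<Rightarrow> 'o"
    and Mor :: "nat \<Rightarrow> nat \<Rightarrow> (int \<Rightarrow> int) \<Rightarrow> 'm"
begin

definition dface :: "nat \<Rightarrow> nat \<Rightarrow> 'm" where
  "dface n i = Mor (n - 1) n (eps n i)"

definition sdeg :: "nat \<Rightarrow> nat \<Rightarrow> 'm" where
  "sdeg n i = Mor (n + 1) n (eta n i)"

definition tcyc :: "nat \<Rightarrow> 'm" where
  "tcyc n = Mor n n (tau n)"

definition Tcyc :: "nat \<Rightarrow> 'm" where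
  "Tcyc n = mpow C (Ob n) (n + 1) (tcyc n)"

definition cyclic :: bool where
  "cyclic \<longleftrightarrow> (\<forall>n. Tcyc n = idm C (Ob n))"

definition pfac :: "nat \<Rightarrow> nat \<Rightarrow> 'm" where
  "pfac n i = mns C (idm C (Ob n)) (cmp C (sdeg (n - 1) i) (dface n (i + 1)))"

definition pop :: "nat \<Rightarrow> 'm" where
  "pop n = foldr (\<lambda>i acc. cmp C (pfac n i) acc) [0..<n] (idm C (Ob n))"

text \<open>Karoubi operator; for n = 0 the term s_{-1,0} d_{0,0} factors through M_{-1} = 0
and is the zero map.\<close>
definition kar :: "nat \<Rightarrow> 'm" where
  "kar n = sgnm C n
     (mns C (cmp C (dface (n + 1) 0) (sdeg n (n + 1)))
            (if n = 0 then zer C (Ob 0) (Ob 0) else cmp C (sdeg (n - 1) n) (dface n 0)))"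

definition dk :: "nat \<Rightarrow> 'm" where
  "dk n = sgnm C n (cmp C (dface (n + 1) 0)
            (cmp C (mpow C (Ob (n + 1)) n (kar (n + 1))) (sdeg n (n + 1))))"

end

end

theory Submission
  imports Defs
begin


lemma mono_int_step:
  fixes f :: "int \<Rightarrow> int"
  assumes "\<And>v. f v \<le> f (v + 1)"
  shows "mono f"
proof (rule monoI)
  fix x y :: int assume "x \<le> y"
  then obtain d where y: "y = x + int d" by (metis zle_iff_zadd)
  have "f x \<le> f (x + int d)"
  proof (induction d)
    case 0 then show ?case by simp
  next
    case (Suc d)
    have "f (x + int d) \<le> f (x + int d + 1)" by (rule assms)
    then have "f x \<le> f (x + int d + 1)" using Suc by (rule order_trans[rotated])
    moreover have e: "x + int (Suc d) = x + int d + 1" by simp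
    ultimately show ?case unfolding e by simp
  qed
  then show "f x \<le> f y" using y by simp
qed

lemma per_ext_decomp:
  assumes "0 \<le> r" "r \<le> int m"
  shows "per_ext m n g (r + q * (int m + 1)) = q * (int n + 1) + g r"
proof -
  have "(r + q * (int m + 1)) div (int m + 1) = q" using assms by simp
  moreover have "(r + q * (int m + 1)) mod (int m + 1) = r" using assms by simp
  ultimately show ?thesis by (simp add: per_ext_def)
qed

lemma per_ext_base:
  assumes "0 \<le> j" "j \<le> int m"
  shows "per_ext m n g j = g j"
  using per_ext_decomp[OF assms, of n g 0] by simp

lemma per_ext_second:
  assumes "int m + 1 \<le> j" "j \<le> 2 * int m + 1"
  shows "per_ext m n g j = int n + 1 + g (j - int m - 1)"
  using per_ext_decomp[of "j - int m - 1" m n g 1] assms by simp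

lemma per_ext_periodic:
  "per_ext m n g (j + int m + 1) = per_ext m n g j + int n + 1"
proof -
  have e: "j + int m + 1 = j + (int m + 1)" by simp
  have "(j + int m + 1) div (int m + 1) = j div (int m + 1) + 1"
    unfolding e by (rule div_add_self2) simp
  moreover have "(j + int m + 1) mod (int m + 1) = j mod (int m + 1)"
    unfolding e by (rule mod_add_self2)
  ultimately show ?thesis by (simp add: per_ext_def algebra_simps)
qed

lemma per_ext_step:
  assumes "\<And>j. 0 \<le> j \<Longrightarrow> j < int m \<Longrightarrow> g j \<le> g (j + 1)"
    and "g (int m) \<le> g 0 + int n + 1"
  shows "per_ext m n g v \<le> per_ext m n g (v + 1)"
proof -
  define q where "q = v div (int m + 1)"
  define r where "r = v mod (int m + 1)"
  have r: "0 \<le> r" "r \<le> int m" unfolding r_def using pos_mod_bound[of "int m + 1" v] by simp_all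
  have v: "v = r + q * (int m + 1)" unfolding q_def r_def by (metis add.commute div_mult_mod_eq)
  have a0: "per_ext m n g v = q * (int n + 1) + g r" unfolding v by (rule per_ext_decomp[OF r])
  show ?thesis
  proof (cases "r < int m")
    case True
    have e: "v + 1 = (r + 1) + q * (int m + 1)" using v by simp
    have "per_ext m n g (v + 1) = q * (int n + 1) + g (r + 1)" unfolding e
      by (rule per_ext_decomp) (use r True in auto)
    then show ?thesis using a0 assms(1)[of r] r True by simp
  next
    case False
    then have rm: "r = int m" using r by simp
    then have e: "v + 1 = 0 + (q + 1) * (int m + 1)" using v by (simp add: algebra_simps)
    have "per_ext m n g (v + 1) = (q + 1) * (int n + 1) + g 0" unfolding e
      by (rule per_ext_decomp) auto
    then show ?thesis using a0 rm assms(2) by (simp add: algebra_simps)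
  qed
qed

lemma lam_plus_per_ext:
  assumes "\<And>j. 0 \<le> j \<Longrightarrow> j < int m \<Longrightarrow> g j \<le> g (j + 1)"
    and "g (int m) \<le> g 0 + int n + 1" and "0 \<le> g 0"
  shows "lam_plus m n (per_ext m n g)"
proof -
  have "\<And>v. per_ext m n g v \<le> per_ext m n g (v + 1)"
    by (rule per_ext_step) (use assms in auto)
  then have "mono (per_ext m n g)" by (rule mono_int_step)
  then show ?thesis unfolding lam_plus_def lam_inf_def
    using per_ext_periodic per_ext_base[of 0 m n g] assms(3) by auto
qed

lemma lam_plus_eps: "lam_plus (n - 1) n (eps n i)"
  unfolding eps_def by (rule lam_plus_per_ext) auto

lemma lam_plus_eta: "lam_plus (n + 1) n (eta n i)"
  unfolding eta_def by (rule lam_plus_per_ext) auto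

lemma tau_eq: "tau n = (\<lambda>v. v + 1)"
proof (rule ext)
  fix v :: int
  show "tau n v = v + 1" unfolding tau_def per_ext_def
    using div_mult_mod_eq[of v "int n + 1"] by simp
qed

lemma lam_plus_tau: "lam_plus n n (tau n)"
  unfolding tau_def by (rule lam_plus_per_ext) auto

lemma lam_plus_id: "lam_plus m m id"
  by (simp add: lam_plus_def lam_inf_def mono_def)

lemma lam_plus_comp:
  assumes "lam_plus m n f" "lam_plus n k g"
  shows "lam_plus m k (g \<circ> f)"
proof -
  have mf: "mono f" and mg: "mono g" using assms by (auto simp: lam_plus_def lam_inf_def)
  have "g (f 0) \<ge> g 0" using mg assms(1) by (auto simp: lam_plus_def mono_def)
  moreover have "g 0 \<ge> 0" using assms(2) by (simp add: lam_plus_def)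
  ultimately have "g (f 0) \<ge> 0" by linarith
  then show ?thesis using assms mf mg
    by (auto simp: lam_plus_def lam_inf_def mono_def)
qed

lemma lam_plus_shift: "lam_plus n n (\<lambda>v. v + int k)"
  by (simp add: lam_plus_def lam_inf_def mono_def)

lemma lam_inf_shift_nat:
  assumes "lam_inf m n f"
  shows "f (j + int k * (int m + 1)) = f j + int k * (int n + 1)"
proof (induction k)
  case 0 then show ?case by simp
next
  case (Suc k)
  have "f (j + int (Suc k) * (int m + 1)) = f ((j + int k * (int m + 1)) + int m + 1)"
    by (simp add: algebra_simps)
  also have "\<dots> = f (j + int k * (int m + 1)) + int n + 1"
    using assms by (simp add: lam_inf_def)
  finally show ?case using Suc by (simp add: algebra_simps)
qed

lemma lam_inf_shift:
  assumes "lam_inf m n f"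
  shows "f (j + q * (int m + 1)) = f j + q * (int n + 1)"
proof (cases "q \<ge> 0")
  case True
  then show ?thesis using lam_inf_shift_nat[OF assms, of j "nat q"] by simp
next
  case False
  have "f ((j + q * (int m + 1)) + int (nat (-q)) * (int m + 1)) = f (j + q * (int m + 1)) + int (nat (-q)) * (int n + 1)"
    by (rule lam_inf_shift_nat[OF assms])
  then show ?thesis using False by (simp add: algebra_simps)
qed

lemma lam_inf_eqI:
  assumes "lam_inf m n f" "lam_inf m n g"
    and "\<And>j. 0 \<le> j \<Longrightarrow> j \<le> int m \<Longrightarrow> f j = g j"
  shows "f = g"
proof (rule ext)
  fix v
  define q where "q = v div (int m + 1)"
  define r where "r = v mod (int m + 1)"
  have r: "0 \<le> r" "r \<le> int m" unfolding r_def using pos_mod_bound[of "int m + 1" v] by simp_all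
  have v: "v = r + q * (int m + 1)" unfolding q_def r_def by (metis add.commute div_mult_mod_eq)
  show "f v = g v" using v lam_inf_shift[OF assms(1), of r q] lam_inf_shift[OF assms(2), of r q] assms(3)[OF r]
    by simp
qed



definition alp :: "nat \<Rightarrow> int \<Rightarrow> int" where
  "alp n = eps (Suc n) 0 \<circ> eta n (Suc n)"

definition xmap :: "nat \<Rightarrow> bool \<Rightarrow> int \<Rightarrow> int" where
  "xmap n b = (if b then tau (Suc n) else alp n)"

definition xsm :: "nat \<Rightarrow> bool list \<Rightarrow> int \<Rightarrow> int" where
  "xsm n c = foldr (\<lambda>b h. xmap n b \<circ> h) c id"

definition emap :: "nat \<Rightarrow> nat \<Rightarrow> int \<Rightarrow> int" where
  "emap n i = eps n (Suc i) \<circ> eta (n - 1) i"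

fun Gm :: "nat \<Rightarrow> nat \<Rightarrow> bool list \<Rightarrow> int \<Rightarrow> int" where
  "Gm n i [] = id"
| "Gm n i (b # c) = Gm n (Suc i) c \<circ> (if b then emap n i else id)"

lemma xsm_Nil[simp]: "xsm n [] = id" by (simp add: xsm_def)
lemma xsm_Cons[simp]: "xsm n (b # c) = xmap n b \<circ> xsm n c" by (simp add: xsm_def)

lemma lam_plus_eps_Suc: "lam_plus n (Suc n) (eps (Suc n) i)"
  using lam_plus_eps[of "Suc n" i] by simp

lemma lam_plus_eta_Suc: "lam_plus (Suc n) n (eta n i)"
  using lam_plus_eta[of n i] by simp

lemma lam_plus_alp: "lam_plus (Suc n) (Suc n) (alp n)"
  unfolding alp_def by (rule lam_plus_comp[OF lam_plus_eta_Suc lam_plus_eps_Suc])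

lemma lam_plus_xmap: "lam_plus (Suc n) (Suc n) (xmap n b)"
  unfolding xmap_def using lam_plus_alp lam_plus_tau by simp

lemma lam_plus_xsm: "lam_plus (Suc n) (Suc n) (xsm n c)"
proof (induction c)
  case Nil show ?case using lam_plus_id[of "Suc n"] by (simp add: id_def)
next
  case (Cons b c) show ?case unfolding xsm_Cons by (rule lam_plus_comp[OF Cons.IH lam_plus_xmap])
qed

lemma lam_plus_emap: "0 < n \<Longrightarrow> lam_plus n n (emap n i)"
  unfolding emap_def using lam_plus_comp[OF lam_plus_eta[of "n - 1" i] lam_plus_eps[of n "Suc i"]] by simp

lemma lam_plus_Gm: "0 < n \<Longrightarrow> lam_plus n n (Gm n i c)"
  by (induction c arbitrary: i) (auto intro: lam_plus_comp lam_plus_emap lam_plus_id)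

lemma eps0_val: "0 \<le> j \<Longrightarrow> j \<le> int n \<Longrightarrow> eps (Suc n) 0 j = j + 1"
  unfolding eps_def by (simp add: per_ext_base)

lemma eps0_val2: "int n + 1 \<le> j \<Longrightarrow> j \<le> 2 * int n + 1 \<Longrightarrow> eps (Suc n) 0 j = j + 2"
  unfolding eps_def by (simp add: per_ext_second)

lemma eta_top_val: "0 \<le> v \<Longrightarrow> v \<le> int n + 1 \<Longrightarrow> eta n (Suc n) v = v"
  unfolding eta_def by (simp add: per_ext_base)

lemma eta_top_val2: "int n + 2 \<le> v \<Longrightarrow> v \<le> 2 * int n + 3 \<Longrightarrow> eta n (Suc n) v = v - 1"
  unfolding eta_def by (simp add: per_ext_second)

lemma alp_val:
  assumes "0 \<le> v" "v \<le> 2 * int n + 2"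
  shows "alp n v = (if v = int n + 1 then v + 2 else v + 1)"
proof -
  consider "v \<le> int n" | "v = int n + 1" | "int n + 2 \<le> v" by linarith
  then show ?thesis
  proof cases
    case 1 then show ?thesis using assms by (simp add: alp_def eta_top_val eps0_val)
  next
    case 2 then show ?thesis using assms by (simp add: alp_def eta_top_val eps0_val2)
  next
    case 3 then show ?thesis using assms by (simp add: alp_def eta_top_val2 eps0_val2)
  qed
qed

lemma emap_val:
  assumes "i < n" "0 \<le> j" "j \<le> int n"
  shows "emap n i j = (if j = int i + 1 then int i else j)"
proof -
  have e1: "eta (n - 1) i j = (if j \<le> int i then j else j - 1)"
    unfolding eta_def using assms by (subst per_ext_base) auto
  have e2: "eps n (Suc i) w = (if w < int i + 1 then w else w + 1)" if "0 \<le> w" "w \<le> int n - 1" for w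
    unfolding eps_def using assms that by (subst per_ext_base) auto
  have em: "emap n i j = eps n (Suc i) (eta (n - 1) i j)" by (simp add: emap_def)
  consider "j \<le> int i" | "j = int i + 1" | "int i + 2 \<le> j" by linarith
  then show ?thesis
  proof cases
    case 1 then show ?thesis using em e1 e2[of j] assms by simp
  next
    case 2 then show ?thesis using em e1 e2[of "int i"] assms by simp
  next
    case 3 then show ?thesis using em e1 e2[of "j - 1"] assms by simp
  qed
qed

lemma L_val:
  assumes "length ds = k" "k \<le> n" "j \<le> n"
  shows "xsm n ds (eps (Suc n) 0 (int j)) = int j + 1 + int k + (if n + 1 \<le> j + k \<and> \<not> ds ! (j + k - n - 1) then 1 else 0)"
  using assms
proof (induction ds arbitrary: k)
  case Nil then show ?case by (simp add: eps0_val)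
next
  case (Cons b ds)
  define k' where "k' = length ds"
  have k: "k = Suc k'" using Cons.prems k'_def by simp
  have IH: "xsm n ds (eps (Suc n) 0 (int j)) = int j + 1 + int k' + (if n + 1 \<le> j + k' \<and> \<not> ds ! (j + k' - n - 1) then 1 else 0)"
    using Cons.IH[of k'] Cons.prems k'_def by simp
  define v where "v = xsm n ds (eps (Suc n) 0 (int j))"
  have lhs: "xsm n (b # ds) (eps (Suc n) 0 (int j)) = xmap n b v" by (simp add: v_def)
  consider "j + k' < n" | "j + k' = n" | "n < j + k'" by linarith
  then show ?case
  proof cases
    case 1
    then have "v = int j + 1 + int k'" using IH v_def by simp
    moreover have "v \<noteq> int n + 1" "0 \<le> v" "v \<le> 2 * int n + 2" using 1 calculation by simp_all
    ultimately show ?thesis using lhs k 1 by (simp add: xmap_def tau_eq alp_val)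
  next
    case 2
    then have "v = int j + 1 + int k'" using IH v_def by simp
    moreover have "v = int n + 1" using 2 calculation by simp
    ultimately show ?thesis using lhs k 2 by (simp add: xmap_def tau_eq alp_val)
  next
    case 3
    then have v: "v = int j + 1 + int k' + (if \<not> ds ! (j + k' - n - 1) then 1 else 0)" using IH v_def by simp
    have idx: "j + k - n - 1 = Suc (j + k' - n - 1)" using 3 k by simp
    have "v \<noteq> int n + 1" "0 \<le> v" "v \<le> 2 * int n + 2" using 3 v Cons.prems k by auto
    then show ?thesis using lhs k 3 v idx by (simp add: xmap_def tau_eq alp_val)
  qed
qed

lemma F_val:
  assumes "length c = n" "j \<le> n"
  shows "(eta n (Suc n) \<circ> xsm n c \<circ> eps (Suc n) 0) (int j) = int j + int n + 1 - (if 1 \<le> j \<and> c ! (j - 1) then 1 else 0)"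
proof -
  have L: "xsm n c (eps (Suc n) 0 (int j)) = int j + 1 + int n + (if 1 \<le> j \<and> \<not> c ! (j - 1) then 1 else 0)"
    using L_val[OF assms(1) _ assms(2)] by simp
  show ?thesis
  proof (cases "j = 0")
    case True then show ?thesis using L by (simp add: eta_top_val)
  next
    case False then show ?thesis using L assms by (simp add: eta_top_val2)
  qed
qed

lemma G_val:
  assumes "length c + i = n" "j \<le> n"
  shows "Gm n i c (int j) = int j - (if i + 1 \<le> j \<and> c ! (j - i - 1) then 1 else 0)"
  using assms
proof (induction c arbitrary: i j)
  case Nil then show ?case by simp
next
  case (Cons b c)
  have i: "i < n" using Cons.prems by simp
  have IHj: "Gm n (Suc i) c (int j) = int j - (if Suc i + 1 \<le> j \<and> c ! (j - Suc i - 1) then 1 else 0)"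
    using Cons.IH[of "Suc i" j] Cons.prems by simp
  have IHi: "Gm n (Suc i) c (int i) = int i"
    using Cons.IH[of "Suc i" i] Cons.prems by simp
  show ?case
  proof (cases "b \<and> j = i + 1")
    case True
    then have "(if b then emap n i else id) (int j) = int i" using i Cons.prems by (simp add: emap_val)
    then show ?thesis using True IHi i by simp
  next
    case False
    then have a: "(if b then emap n i else id) (int j) = int j" using i Cons.prems by (auto simp: emap_val)
    consider "j \<le> i" | "j = i + 1" | "i + 2 \<le> j" by linarith
    then show ?thesis
    proof cases
      case 1 then show ?thesis using a IHj Cons.prems by simp
    next
      case 2 then show ?thesis using a IHj Cons.prems False by simp
    next
      case 3
      have idx: "j - i - 1 = Suc (j - Suc i - 1)" using 3 by simp
      show ?thesis using a IHj Cons.prems 3 idx by simp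
    qed
  qed
qed

lemma key_map_eq:
  assumes "length c = n"
  shows "eta n (Suc n) \<circ> xsm n c \<circ> eps (Suc n) 0 = (\<lambda>v. v + int (Suc n)) \<circ> Gm n 0 c"
proof -
  have l1: "lam_plus n n (eta n (Suc n) \<circ> xsm n c \<circ> eps (Suc n) 0)"
    by (rule lam_plus_comp[OF lam_plus_eps_Suc lam_plus_comp[OF lam_plus_xsm lam_plus_eta_Suc]])
  have l2: "lam_plus n n ((\<lambda>v. v + int (Suc n)) \<circ> Gm n 0 c)"
  proof (cases "n = 0")
    case True
    then have "c = []" using assms by simp
    have "lam_plus n n ((\<lambda>v. v + int (Suc n)) \<circ> id)" by (rule lam_plus_comp[OF lam_plus_id lam_plus_shift])
    then show ?thesis using \<open>c = []\<close> by simp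
  next
    case False
    then show ?thesis by (intro lam_plus_comp[OF lam_plus_Gm lam_plus_shift]) auto
  qed
  show ?thesis
  proof (rule lam_inf_eqI[of n n])
    show "lam_inf n n (eta n (Suc n) \<circ> xsm n c \<circ> eps (Suc n) 0)" using l1 by (simp add: lam_plus_def)
    show "lam_inf n n ((\<lambda>v. v + int (Suc n)) \<circ> Gm n 0 c)" using l2 by (simp add: lam_plus_def)
  next
    fix j :: int assume j: "0 \<le> j" "j \<le> int n"
    then obtain j' where j': "j = int j'" "j' \<le> n" by (metis nat_int nat_le_iff zero_le_imp_eq_int)
    show "(eta n (Suc n) \<circ> xsm n c \<circ> eps (Suc n) 0) j = ((\<lambda>v. v + int (Suc n)) \<circ> Gm n 0 c) j"
      using F_val[OF assms j'(2)] G_val[of c 0 n j'] assms j' by simp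
  qed
qed

lemma tt_map_eq: "eta (Suc n) (Suc (Suc n)) \<circ> eps (Suc (Suc n)) 0 = tau (Suc n)"
proof (rule lam_inf_eqI[of "Suc n" "Suc n"])
  show "lam_inf (Suc n) (Suc n) (eta (Suc n) (Suc (Suc n)) \<circ> eps (Suc (Suc n)) 0)"
    using lam_plus_comp[OF lam_plus_eps_Suc lam_plus_eta_Suc] by (simp add: lam_plus_def)
  show "lam_inf (Suc n) (Suc n) (tau (Suc n))" using lam_plus_tau by (simp add: lam_plus_def)
next
  fix j :: int assume "0 \<le> j" "j \<le> int (Suc n)"
  then show "(eta (Suc n) (Suc (Suc n)) \<circ> eps (Suc (Suc n)) 0) j = tau (Suc n) j"
    by (simp add: eps0_val eta_top_val tau_eq)
qed



locale padd =
  fixes C :: "('o, 'm) preadd_cat"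
  assumes pa: "preadditive C"
begin

lemmas PA = pa[unfolded preadditive_def]

lemma cmp_hom[intro]: "f \<in> hom C a b \<Longrightarrow> g \<in> hom C b c \<Longrightarrow> cmp C g f \<in> hom C a c"
  using PA[THEN conjunct1] by blast
lemma assoc: "f \<in> hom C a b \<Longrightarrow> g \<in> hom C b c \<Longrightarrow> h \<in> hom C c d \<Longrightarrow>
        cmp C h (cmp C g f) = cmp C (cmp C h g) f"
  using PA[THEN conjunct2, THEN conjunct1] by blast
lemma idm_hom[intro,simp]: "idm C a \<in> hom C a a"
  using PA[THEN conjunct2, THEN conjunct2, THEN conjunct1] by blast
lemma id_l[simp]: "f \<in> hom C a b \<Longrightarrow> cmp C (idm C b) f = f"
  using PA[THEN conjunct2, THEN conjunct2, THEN conjunct2, THEN conjunct1] by blast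
lemma id_r[simp]: "f \<in> hom C a b \<Longrightarrow> cmp C f (idm C a) = f"
  using PA[THEN conjunct2, THEN conjunct2, THEN conjunct2, THEN conjunct1] by blast
lemma zer_hom[intro,simp]: "zer C a b \<in> hom C a b"
  using PA[THEN conjunct2, THEN conjunct2, THEN conjunct2, THEN conjunct2, THEN conjunct1] by blast
lemma pls_hom[intro]: "f \<in> hom C a b \<Longrightarrow> g \<in> hom C a b \<Longrightarrow> pls C f g \<in> hom C a b"
  using PA[THEN conjunct2, THEN conjunct2, THEN conjunct2, THEN conjunct2, THEN conjunct2, THEN conjunct1] by blast
lemma pls_comm: "f \<in> hom C a b \<Longrightarrow> g \<in> hom C a b \<Longrightarrow> pls C f g = pls C g f"
  using PA[THEN conjunct2, THEN conjunct2, THEN conjunct2, THEN conjunct2, THEN conjunct2, THEN conjunct1] by blast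
lemma pls_assoc: "f \<in> hom C a b \<Longrightarrow> g \<in> hom C a b \<Longrightarrow> h \<in> hom C a b \<Longrightarrow>
        pls C (pls C f g) h = pls C f (pls C g h)"
  using PA[THEN conjunct2, THEN conjunct2, THEN conjunct2, THEN conjunct2, THEN conjunct2, THEN conjunct2, THEN conjunct1] by blast
lemma pls_zer[simp]: "f \<in> hom C a b \<Longrightarrow> pls C f (zer C a b) = f"
  using PA[THEN conjunct2, THEN conjunct2, THEN conjunct2, THEN conjunct2, THEN conjunct2, THEN conjunct2, THEN conjunct2, THEN conjunct1] by blast
lemma neg_hom[intro]: "f \<in> hom C a b \<Longrightarrow> neg C f \<in> hom C a b"
  using PA[THEN conjunct2, THEN conjunct2, THEN conjunct2, THEN conjunct2, THEN conjunct2, THEN conjunct2, THEN conjunct2, THEN conjunct1] by blast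
lemma pls_neg: "f \<in> hom C a b \<Longrightarrow> pls C f (neg C f) = zer C a b"
  using PA[THEN conjunct2, THEN conjunct2, THEN conjunct2, THEN conjunct2, THEN conjunct2, THEN conjunct2, THEN conjunct2, THEN conjunct1] by blast
lemma distl: "f \<in> hom C a b \<Longrightarrow> g \<in> hom C b c \<Longrightarrow> g' \<in> hom C b c \<Longrightarrow>
        cmp C (pls C g g') f = pls C (cmp C g f) (cmp C g' f)"
  using PA[THEN conjunct2, THEN conjunct2, THEN conjunct2, THEN conjunct2, THEN conjunct2, THEN conjunct2, THEN conjunct2, THEN conjunct2, THEN conjunct1] by blast
lemma distr: "f \<in> hom C a b \<Longrightarrow> f' \<in> hom C a b \<Longrightarrow> g \<in> hom C b c \<Longrightarrow>
        cmp C g (pls C f f') = pls C (cmp C g f) (cmp C g f')"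
  using PA[THEN conjunct2, THEN conjunct2, THEN conjunct2, THEN conjunct2, THEN conjunct2, THEN conjunct2, THEN conjunct2, THEN conjunct2, THEN conjunct2] by blast

lemma zer_pls[simp]: "f \<in> hom C a b \<Longrightarrow> pls C (zer C a b) f = f"
  using pls_comm[of "zer C a b" a b f] by simp

lemma pls_lcomm: "f \<in> hom C a b \<Longrightarrow> g \<in> hom C a b \<Longrightarrow> h \<in> hom C a b \<Longrightarrow>
        pls C f (pls C g h) = pls C g (pls C f h)"
proof -
  assume f: "f \<in> hom C a b" and g: "g \<in> hom C a b" and h: "h \<in> hom C a b"
  have "pls C f (pls C g h) = pls C (pls C f g) h" using pls_assoc[OF f g h] by simp
  also have "\<dots> = pls C (pls C g f) h" using pls_comm[OF f g] by simp
  also have "\<dots> = pls C g (pls C f h)" using pls_assoc[OF g f h] by simp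
  finally show ?thesis .
qed

lemma idem_zer:
  assumes "x \<in> hom C a b" "pls C x x = x"
  shows "x = zer C a b"
proof -
  have "x = pls C x (pls C x (neg C x))" using assms pls_neg by simp
  also have "\<dots> = pls C (pls C x x) (neg C x)"
    by (rule pls_assoc[symmetric]) (use assms in \<open>auto intro: neg_hom\<close>)
  also have "\<dots> = zer C a b" using assms pls_neg by simp
  finally show ?thesis .
qed

lemma neg_unique:
  assumes "x \<in> hom C a b" "y \<in> hom C a b" "pls C x y = zer C a b"
  shows "y = neg C x"
proof -
  have "y = pls C y (pls C x (neg C x))" using assms pls_neg by simp
  also have "\<dots> = pls C (pls C y x) (neg C x)" using assms pls_assoc[of y a b x "neg C x"] by (simp add: neg_hom)
  also have "\<dots> = pls C (pls C x y) (neg C x)" using assms pls_comm[of y a b x] by simp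
  also have "\<dots> = neg C x" using assms by (simp add: neg_hom)
  finally show ?thesis .
qed

lemma neg_neg[simp]: "x \<in> hom C a b \<Longrightarrow> neg C (neg C x) = x"
proof -
  assume x: "x \<in> hom C a b"
  have "pls C (neg C x) x = zer C a b" using x pls_comm[of x a b "neg C x"] pls_neg[OF x] by (simp add: neg_hom)
  then show ?thesis using neg_unique[of "neg C x" a b x] x by (simp add: neg_hom)
qed

lemma neg_pls: "x \<in> hom C a b \<Longrightarrow> y \<in> hom C a b \<Longrightarrow> neg C (pls C x y) = pls C (neg C x) (neg C y)"
proof -
  assume x: "x \<in> hom C a b" and y: "y \<in> hom C a b"
  have nx: "neg C x \<in> hom C a b" and ny: "neg C y \<in> hom C a b" using x y by (auto intro: neg_hom)
  have "pls C (pls C x y) (pls C (neg C x) (neg C y)) = pls C x (pls C y (pls C (neg C x) (neg C y)))"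
    using pls_assoc[OF x y pls_hom[OF nx ny]] .
  also have "pls C y (pls C (neg C x) (neg C y)) = pls C (neg C x) (pls C y (neg C y))"
    using pls_lcomm[OF y nx ny] .
  also have "pls C x (pls C (neg C x) (pls C y (neg C y))) = pls C (pls C x (neg C x)) (pls C y (neg C y))"
    using pls_assoc[OF x nx pls_hom[OF y ny]] by simp
  also have "\<dots> = zer C a b" using x y by (simp add: pls_neg)
  finally have "pls C (pls C x y) (pls C (neg C x) (neg C y)) = zer C a b" .
  then show ?thesis using neg_unique[OF pls_hom[OF x y] pls_hom[OF nx ny]] by simp
qed

lemma cmp_zer_l[simp]: "F \<in> hom C c a \<Longrightarrow> cmp C (zer C a b) F = zer C c b"
proof -
  assume F: "F \<in> hom C c a"
  have "pls C (cmp C (zer C a b) F) (cmp C (zer C a b) F) = cmp C (zer C a b) F"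
    using F distl[of F c a "zer C a b" b "zer C a b"] by simp
  then show ?thesis using F by (intro idem_zer) auto
qed

lemma cmp_zer_r[simp]: "F \<in> hom C b c \<Longrightarrow> cmp C F (zer C a b) = zer C a c"
proof -
  assume F: "F \<in> hom C b c"
  have "pls C (cmp C F (zer C a b)) (cmp C F (zer C a b)) = cmp C F (zer C a b)"
    using F distr[of "zer C a b" a b "zer C a b" F c] by simp
  then show ?thesis using F by (intro idem_zer) auto
qed

lemma cmp_neg_l: "f \<in> hom C a b \<Longrightarrow> F \<in> hom C c a \<Longrightarrow> cmp C (neg C f) F = neg C (cmp C f F)"
proof -
  assume f: "f \<in> hom C a b" and F: "F \<in> hom C c a"
  have "pls C (cmp C f F) (cmp C (neg C f) F) = cmp C (pls C f (neg C f)) F"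
    using f F by (simp add: distl neg_hom)
  also have "\<dots> = zer C c b" using f F by (simp add: pls_neg)
  finally show ?thesis using f F by (intro neg_unique) (auto intro: neg_hom)
qed

lemma cmp_neg_r: "f \<in> hom C a b \<Longrightarrow> F \<in> hom C b c \<Longrightarrow> cmp C F (neg C f) = neg C (cmp C F f)"
proof -
  assume f: "f \<in> hom C a b" and F: "F \<in> hom C b c"
  have "pls C (cmp C F f) (cmp C F (neg C f)) = cmp C F (pls C f (neg C f))"
    using f F by (simp add: distr neg_hom)
  also have "\<dots> = zer C a c" using f F by (simp add: pls_neg)
  finally show ?thesis using f F by (intro neg_unique) (auto intro: neg_hom)
qed

lemma sgnm_hom[intro]: "f \<in> hom C a b \<Longrightarrow> sgnm C k f \<in> hom C a b"
  by (auto simp: sgnm_def)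

lemma sgnm_Suc: "sgnm C (Suc k) f = neg C (sgnm C k f)" if "f \<in> hom C a b"
  using that by (simp add: sgnm_def)

lemma sgnm_neg: "f \<in> hom C a b \<Longrightarrow> sgnm C k (neg C f) = neg C (sgnm C k f)"
  by (simp add: sgnm_def)

lemma sgnm_add: "f \<in> hom C a b \<Longrightarrow> sgnm C k (sgnm C m f) = sgnm C (k + m) f"
  by (auto simp: sgnm_def)

lemma cmp_sgnm_l: "f \<in> hom C a b \<Longrightarrow> F \<in> hom C c a \<Longrightarrow> cmp C (sgnm C k f) F = sgnm C k (cmp C f F)"
  by (simp add: sgnm_def cmp_neg_l)

lemma cmp_sgnm_r: "f \<in> hom C a b \<Longrightarrow> F \<in> hom C b c \<Longrightarrow> cmp C F (sgnm C k f) = sgnm C k (cmp C F f)"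
  by (simp add: sgnm_def cmp_neg_r)

lemma mns_swap: "f \<in> hom C a b \<Longrightarrow> g \<in> hom C a b \<Longrightarrow> mns C f g = neg C (mns C g f)"
proof -
  assume f: "f \<in> hom C a b" and g: "g \<in> hom C a b"
  have "neg C (mns C g f) = pls C (neg C g) f"
    unfolding mns_def using neg_pls[OF g neg_hom[OF f]] f by simp
  also have "\<dots> = pls C f (neg C g)" using pls_comm[OF neg_hom[OF g] f] .
  finally show ?thesis unfolding mns_def by simp
qed

definition lsum :: "'o \<Rightarrow> 'o \<Rightarrow> 'm list \<Rightarrow> 'm" where
  "lsum a b L = foldr (pls C) L (zer C a b)"

lemma lsum_Nil[simp]: "lsum a b [] = zer C a b" by (simp add: lsum_def)
lemma lsum_Cons[simp]: "lsum a b (x # L) = pls C x (lsum a b L)" by (simp add: lsum_def)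

lemma lsum_hom[intro]: "(\<And>x. x \<in> set L \<Longrightarrow> x \<in> hom C a b) \<Longrightarrow> lsum a b L \<in> hom C a b"
  by (induction L) auto

lemma lsum_append: "(\<And>x. x \<in> set (L1 @ L2) \<Longrightarrow> x \<in> hom C a b) \<Longrightarrow>
   lsum a b (L1 @ L2) = pls C (lsum a b L1) (lsum a b L2)"
proof (induction L1)
  case Nil then show ?case using lsum_hom[of L2 a b] by simp
next
  case (Cons x L1)
  have x: "x \<in> hom C a b" using Cons.prems by simp
  have h1: "lsum a b L1 \<in> hom C a b" "lsum a b L2 \<in> hom C a b" using Cons.prems by (auto intro!: lsum_hom)
  show ?case using Cons pls_assoc[OF x h1] by simp
qed

lemma lsum_map_pls:
  assumes "\<And>x. x \<in> set L \<Longrightarrow> u x \<in> hom C a b \<and> v x \<in> hom C a b"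
  shows "lsum a b (map (\<lambda>x. pls C (u x) (v x)) L) = lsum a b (map u L @ map v L)"
  using assms
proof (induction L)
  case Nil then show ?case by simp
next
  case (Cons y L)
  have h1: "lsum a b (map u L) \<in> hom C a b" "lsum a b (map v L) \<in> hom C a b"
    using Cons.prems by (auto intro!: lsum_hom)
  have hs: "\<And>x. x \<in> set L \<Longrightarrow> u x \<in> hom C a b \<and> v x \<in> hom C a b" using Cons.prems by simp
  have IH: "lsum a b (map (\<lambda>x. pls C (u x) (v x)) L) = pls C (lsum a b (map u L)) (lsum a b (map v L))"
    using Cons.IH[OF hs] lsum_append[of "map u L" "map v L" a b] hs by auto
  have "lsum a b (map u (y # L) @ map v (y # L)) = pls C (pls C (u y) (lsum a b (map u L))) (pls C (v y) (lsum a b (map v L)))"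
    using Cons.prems by (subst lsum_append) auto
  also have "\<dots> = pls C (pls C (u y) (v y)) (pls C (lsum a b (map u L)) (lsum a b (map v L)))"
  proof -
    have uy: "u y \<in> hom C a b" and vy: "v y \<in> hom C a b" using Cons.prems by auto
    show ?thesis
      using pls_assoc[OF uy h1(1) pls_hom[OF vy h1(2)]] pls_lcomm[OF h1(1) vy h1(2)]
        pls_assoc[OF uy vy pls_hom[OF h1]] by simp
  qed
  finally show ?case using IH by simp
qed

lemma cmp_lsum_r:
  assumes "F \<in> hom C c a" "\<And>x. x \<in> set L \<Longrightarrow> x \<in> hom C a b"
  shows "cmp C (lsum a b L) F = lsum c b (map (\<lambda>x. cmp C x F) L)"
  using assms(2)
proof (induction L)
  case Nil then show ?case using assms(1) by simp
next
  case (Cons x L)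
  have x: "x \<in> hom C a b" using Cons.prems by simp
  have h: "lsum a b L \<in> hom C a b" using Cons.prems by (auto intro!: lsum_hom)
  show ?case using Cons distl[OF assms(1) x h] by simp
qed

lemma cmp_lsum_l:
  assumes "F \<in> hom C b c" "\<And>x. x \<in> set L \<Longrightarrow> x \<in> hom C a b"
  shows "cmp C F (lsum a b L) = lsum a c (map (cmp C F) L)"
  using assms(2)
proof (induction L)
  case Nil then show ?case using assms(1) by simp
next
  case (Cons x L)
  have x: "x \<in> hom C a b" using Cons.prems by simp
  have h: "lsum a b L \<in> hom C a b" using Cons.prems by (auto intro!: lsum_hom)
  show ?case using Cons distr[OF x h assms(1)] by simp
qed

lemma mpow_0[simp]: "mpow C a 0 f = idm C a" by (simp add: mpow_def)
lemma mpow_Suc: "mpow C a (Suc k) f = cmp C f (mpow C a k f)" by (simp add: mpow_def)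
lemma mpow_hom[intro]: "f \<in> hom C a a \<Longrightarrow> mpow C a k f \<in> hom C a a"
  by (induction k) (auto simp: mpow_Suc)

lemma mpow_Suc_r: "f \<in> hom C a a \<Longrightarrow> mpow C a (Suc k) f = cmp C (mpow C a k f) f"
proof (induction k)
  case 0 then show ?case by (simp add: mpow_Suc)
next
  case (Suc k)
  have "mpow C a (Suc (Suc k)) f = cmp C f (cmp C (mpow C a k f) f)"
    using Suc by (simp add: mpow_Suc[of a "Suc k"])
  also have "\<dots> = cmp C (cmp C f (mpow C a k f)) f"
    using assoc[of f a a "mpow C a k f" a f a] Suc.prems mpow_hom[OF Suc.prems, of k] by simp
  finally show ?case by (simp add: mpow_Suc)
qed

lemma mpow_neg: "f \<in> hom C a a \<Longrightarrow> mpow C a k (neg C f) = sgnm C k (mpow C a k f)"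
proof (induction k)
  case 0 then show ?case by (simp add: sgnm_def)
next
  case (Suc k)
  have M: "mpow C a k f \<in> hom C a a" using Suc.prems by (rule mpow_hom)
  have "cmp C (neg C f) (sgnm C k (mpow C a k f)) = neg C (cmp C f (sgnm C k (mpow C a k f)))"
    using cmp_neg_l[OF Suc.prems sgnm_hom[OF M]] .
  also have "\<dots> = neg C (sgnm C k (cmp C f (mpow C a k f)))"
    using cmp_sgnm_r[OF M Suc.prems] by simp
  also have "\<dots> = sgnm C (Suc k) (cmp C f (mpow C a k f))"
    using sgnm_Suc[OF cmp_hom[OF M Suc.prems]] by simp
  finally show ?case using Suc.IH[OF Suc.prems] by (simp add: mpow_Suc)
qed

lemma mpow_sgnm: "f \<in> hom C a a \<Longrightarrow> mpow C a k (sgnm C m f) = sgnm C (m * k) (mpow C a k f)"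
  by (cases "even m") (auto simp: sgnm_def mpow_neg)

fun bl :: "nat \<Rightarrow> bool list list" where
  "bl 0 = [[]]"
| "bl (Suc k) = map (Cons False) (bl k) @ map (Cons True) (bl k)"

lemma bl_length: "c \<in> set (bl k) \<Longrightarrow> length c = k"
  by (induction k arbitrary: c) auto

definition cnt :: "bool list \<Rightarrow> nat" where "cnt c = length (filter id c)"
lemma cnt_simps[simp]: "cnt [] = 0" "cnt (True # c) = Suc (cnt c)" "cnt (False # c) = cnt c"
  by (simp_all add: cnt_def)

fun PrR :: "'o \<Rightarrow> 'm \<Rightarrow> 'm \<Rightarrow> bool list \<Rightarrow> 'm" where
  "PrR a A B [] = idm C a"
| "PrR a A B (b # c) = cmp C (PrR a A B c) (if b then B else A)"

lemma PrR_hom[intro]: "A \<in> hom C a a \<Longrightarrow> B \<in> hom C a a \<Longrightarrow> PrR a A B c \<in> hom C a a"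
  by (induction c) auto

lemma mpow_expand:
  assumes A: "A \<in> hom C a a" and B: "B \<in> hom C a a"
  shows "mpow C a k (mns C A B) = lsum a a (map (\<lambda>c. sgnm C (cnt c) (PrR a A B c)) (bl k))"
proof (induction k)
  case 0 then show ?case by (simp add: sgnm_def)
next
  case (Suc k)
  have F: "mns C A B \<in> hom C a a" using A B by (auto simp: mns_def)
  have "mpow C a (Suc k) (mns C A B) = cmp C (mpow C a k (mns C A B)) (mns C A B)"
    using F by (rule mpow_Suc_r)
  also have "\<dots> = lsum a a (map (\<lambda>x. cmp C x (mns C A B)) (map (\<lambda>c. sgnm C (cnt c) (PrR a A B c)) (bl k)))"
    unfolding Suc using F A B by (subst cmp_lsum_r) auto
  also have "\<dots> = lsum a a (map (\<lambda>c. pls C (sgnm C (cnt c) (cmp C (PrR a A B c) A)) (sgnm C (Suc (cnt c)) (cmp C (PrR a A B c) B))) (bl k))"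
  proof -
    have eq: "cmp C (sgnm C (cnt c) (PrR a A B c)) (mns C A B) = pls C (sgnm C (cnt c) (cmp C (PrR a A B c) A)) (sgnm C (Suc (cnt c)) (cmp C (PrR a A B c) B))" for c
    proof -
      have P: "PrR a A B c \<in> hom C a a" using A B by (rule PrR_hom)
      have "cmp C (sgnm C (cnt c) (PrR a A B c)) (mns C A B) = pls C (cmp C (sgnm C (cnt c) (PrR a A B c)) A) (cmp C (sgnm C (cnt c) (PrR a A B c)) (neg C B))"
        unfolding mns_def using distr[OF A neg_hom[OF B] sgnm_hom[OF P]] .
      also have "\<dots> = pls C (sgnm C (cnt c) (cmp C (PrR a A B c) A)) (sgnm C (Suc (cnt c)) (cmp C (PrR a A B c) B))"
      proof -
        have hY: "cmp C (PrR a A B c) B \<in> hom C a a" using B P by (rule cmp_hom)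
        have e1: "cmp C (sgnm C (cnt c) (PrR a A B c)) (neg C B) = sgnm C (Suc (cnt c)) (cmp C (PrR a A B c) B)"
          using cmp_sgnm_l[OF P neg_hom[OF B], of "cnt c"] cmp_neg_r[OF B P] sgnm_neg[OF hY, of "cnt c"] sgnm_Suc[OF hY, of "cnt c"]
          by simp
        show ?thesis using cmp_sgnm_l[OF P A, of "cnt c"] e1 by simp
      qed
      finally show ?thesis .
    qed
    show ?thesis by (simp add: comp_def eq)
  qed
  also have "\<dots> = lsum a a (map (\<lambda>c. sgnm C (cnt c) (cmp C (PrR a A B c) A)) (bl k) @ map (\<lambda>c. sgnm C (Suc (cnt c)) (cmp C (PrR a A B c) B)) (bl k))"
    using A B by (intro lsum_map_pls) auto
  also have "\<dots> = lsum a a (map (\<lambda>c. sgnm C (cnt c) (PrR a A B c)) (bl (Suc k)))"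
    by (simp add: comp_def)
  finally show ?case .
qed

fun PrL :: "'o \<Rightarrow> (nat \<Rightarrow> 'm) \<Rightarrow> (nat \<Rightarrow> 'm) \<Rightarrow> nat list \<Rightarrow> bool list \<Rightarrow> 'm" where
  "PrL a A B (x # xs) (b # c) = cmp C (if b then B x else A x) (PrL a A B xs c)"
| "PrL a A B _ _ = idm C a"

lemma PrL_hom[intro]: "(\<And>x. x \<in> set xs \<Longrightarrow> A x \<in> hom C a a \<and> B x \<in> hom C a a) \<Longrightarrow> PrL a A B xs c \<in> hom C a a"
  by (induction a A B xs c rule: PrL.induct) auto

lemma foldr_expand:
  assumes "\<And>x. x \<in> set xs \<Longrightarrow> A x \<in> hom C a a \<and> B x \<in> hom C a a"
  shows "foldr (\<lambda>x acc. cmp C (mns C (A x) (B x)) acc) xs (idm C a)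
         = lsum a a (map (\<lambda>c. sgnm C (cnt c) (PrL a A B xs c)) (bl (length xs)))"
  using assms
proof (induction xs)
  case Nil then show ?case by (simp add: sgnm_def)
next
  case (Cons x xs)
  have Ax: "A x \<in> hom C a a" and Bx: "B x \<in> hom C a a" using Cons.prems by auto
  have hs: "\<And>y. y \<in> set xs \<Longrightarrow> A y \<in> hom C a a \<and> B y \<in> hom C a a" using Cons.prems by auto
  have F: "mns C (A x) (B x) \<in> hom C a a" using Ax Bx by (auto simp: mns_def)
  have "foldr (\<lambda>x acc. cmp C (mns C (A x) (B x)) acc) (x # xs) (idm C a)
      = cmp C (mns C (A x) (B x)) (lsum a a (map (\<lambda>c. sgnm C (cnt c) (PrL a A B xs c)) (bl (length xs))))"
    using Cons.IH[OF hs] by simp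
  also have "\<dots> = lsum a a (map (cmp C (mns C (A x) (B x))) (map (\<lambda>c. sgnm C (cnt c) (PrL a A B xs c)) (bl (length xs))))"
    using F hs by (subst cmp_lsum_l) auto
  also have "\<dots> = lsum a a (map (\<lambda>c. pls C (sgnm C (cnt c) (cmp C (A x) (PrL a A B xs c))) (sgnm C (Suc (cnt c)) (cmp C (B x) (PrL a A B xs c)))) (bl (length xs)))"
  proof -
    have eq: "cmp C (mns C (A x) (B x)) (sgnm C (cnt c) (PrL a A B xs c)) = pls C (sgnm C (cnt c) (cmp C (A x) (PrL a A B xs c))) (sgnm C (Suc (cnt c)) (cmp C (B x) (PrL a A B xs c)))" for c
    proof -
      have P: "PrL a A B xs c \<in> hom C a a" using hs by (rule PrL_hom)
      have "cmp C (mns C (A x) (B x)) (sgnm C (cnt c) (PrL a A B xs c)) = pls C (cmp C (A x) (sgnm C (cnt c) (PrL a A B xs c))) (cmp C (neg C (B x)) (sgnm C (cnt c) (PrL a A B xs c)))"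
        unfolding mns_def using distl[OF sgnm_hom[OF P] Ax neg_hom[OF Bx]] .
      also have "\<dots> = pls C (sgnm C (cnt c) (cmp C (A x) (PrL a A B xs c))) (sgnm C (Suc (cnt c)) (cmp C (B x) (PrL a A B xs c)))"
        using cmp_sgnm_r[OF P Ax] cmp_sgnm_r[OF P Bx] cmp_neg_l[OF Bx sgnm_hom[OF P]]
        by (simp add: sgnm_Suc[OF cmp_hom[OF P Bx]])
      finally show ?thesis .
    qed
    show ?thesis by (simp add: comp_def eq)
  qed
  also have "\<dots> = lsum a a (map (\<lambda>c. sgnm C (cnt c) (cmp C (A x) (PrL a A B xs c))) (bl (length xs)) @ map (\<lambda>c. sgnm C (Suc (cnt c)) (cmp C (B x) (PrL a A B xs c))) (bl (length xs)))"
    using Ax Bx hs by (intro lsum_map_pls) auto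
  also have "\<dots> = lsum a a (map (\<lambda>c. sgnm C (cnt c) (PrL a A B (x # xs) c)) (bl (length (x # xs))))"
    by (simp add: comp_def)
  finally show ?case .
qed

end



locale dupl = padd C for C :: "('o, 'm) preadd_cat" +
  fixes Ob :: "nat \<Rightarrow> 'o" and Mor :: "nat \<Rightarrow> nat \<Rightarrow> (int \<Rightarrow> int) \<Rightarrow> 'm"
  assumes du: "duplicial C Ob Mor"
begin

lemma Mor_hom: "lam_plus m n f \<Longrightarrow> Mor m n f \<in> hom C (Ob n) (Ob m)"
  using du unfolding duplicial_def by blast

lemma Mor_id: "Mor m m id = idm C (Ob m)"
  using du unfolding duplicial_def by blast

lemma Mor_id'[simp]: "Mor m m (\<lambda>a. a) = idm C (Ob m)"
  using Mor_id unfolding id_def .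

lemma Mor_comp: "lam_plus m n f \<Longrightarrow> lam_plus n k g \<Longrightarrow> cmp C (Mor m n f) (Mor n k g) = Mor m k (g \<circ> f)"
  using du unfolding duplicial_def by metis

abbreviation "AA n \<equiv> Mor (Suc n) (Suc n) (alp n)"
abbreviation "BB n \<equiv> Mor (Suc n) (Suc n) (tau (Suc n))"

lemma AA_hom: "AA n \<in> hom C (Ob (Suc n)) (Ob (Suc n))" by (rule Mor_hom[OF lam_plus_alp])
lemma BB_hom: "BB n \<in> hom C (Ob (Suc n)) (Ob (Suc n))" by (rule Mor_hom[OF lam_plus_tau])

lemma E1: "cmp C (dface Mor (Suc (Suc n)) 0) (sdeg Mor (Suc n) (Suc (Suc n))) = BB n"
  unfolding dface_def sdeg_def
  using Mor_comp[OF lam_plus_eps_Suc[of "Suc n" 0] lam_plus_eta_Suc[of "Suc n" "Suc (Suc n)"]] tt_map_eq[of n]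
  by simp

lemma E2: "cmp C (sdeg Mor n (Suc n)) (dface Mor (Suc n) 0) = AA n"
  unfolding dface_def sdeg_def alp_def
  using Mor_comp[OF lam_plus_eta_Suc[of n "Suc n"] lam_plus_eps_Suc[of n 0]] by simp

lemma E3: "i < n \<Longrightarrow> cmp C (sdeg Mor (n - 1) i) (dface Mor n (Suc i)) = Mor n n (emap n i)"
  unfolding dface_def sdeg_def emap_def
  using Mor_comp[OF lam_plus_eta[of "n - 1" i] lam_plus_eps[of n "Suc i"]] by simp

lemma kar_eq: "kar C Ob Mor (Suc n) = sgnm C (Suc n) (mns C (BB n) (AA n))"
  unfolding kar_def using E1 E2 by simp

lemma PrR_eq: "PrR (Ob (Suc n)) (AA n) (BB n) c = Mor (Suc n) (Suc n) (xsm n c)"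
proof (induction c)
  case Nil then show ?case by (simp add: Mor_id)
next
  case (Cons b c)
  have "PrR (Ob (Suc n)) (AA n) (BB n) (b # c) = cmp C (Mor (Suc n) (Suc n) (xsm n c)) (Mor (Suc n) (Suc n) (xmap n b))"
    using Cons by (simp add: xmap_def)
  also have "\<dots> = Mor (Suc n) (Suc n) (xmap n b \<circ> xsm n c)"
    by (rule Mor_comp[OF lam_plus_xsm lam_plus_xmap])
  finally show ?case by (simp only: xsm_Cons)
qed

lemma PrL_eq:
  assumes "length c + i = n"
  shows "PrL (Ob n) (\<lambda>_. idm C (Ob n)) (\<lambda>i. cmp C (sdeg Mor (n - 1) i) (dface Mor n (Suc i))) [i..<n] c
         = Mor n n (Gm n i c)"
  using assms
proof (induction c arbitrary: i)
  case Nil then show ?case by (simp add: Mor_id)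
next
  case (Cons b c)
  have i: "i < n" using Cons.prems by simp
  then have ups: "[i..<n] = i # [Suc i..<n]" by (simp add: upt_conv_Cons)
  have n0: "0 < n" using i by simp
  have m: "(if b then cmp C (sdeg Mor (n - 1) i) (dface Mor n (Suc i)) else idm C (Ob n))
        = Mor n n (if b then emap n i else id)"
    using E3[OF i] by (simp add: Mor_id)
  have l: "lam_plus n n (if b then emap n i else id)" using lam_plus_emap[OF n0] lam_plus_id by simp
  have "PrL (Ob n) (\<lambda>_. idm C (Ob n)) (\<lambda>i. cmp C (sdeg Mor (n - 1) i) (dface Mor n (Suc i))) [i..<n] (b # c)
      = cmp C (Mor n n (if b then emap n i else id)) (Mor n n (Gm n (Suc i) c))"
    using Cons.IH[of "Suc i"] Cons.prems E3[OF i, simplified] unfolding ups by (cases b) (simp_all add: Mor_id)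
  also have "\<dots> = Mor n n (Gm n (Suc i) c \<circ> (if b then emap n i else id))"
    by (rule Mor_comp[OF l lam_plus_Gm[OF n0]])
  finally show ?case by (simp only: Gm.simps)
qed

lemma Tcyc_eq: "mpow C (Ob n) k (tcyc Mor n) = Mor n n (\<lambda>v. v + int k)"
proof (induction k)
  case 0
  have "(\<lambda>v::int. v + int 0) = id" by (auto simp: fun_eq_iff)
  then show ?case by (simp add: Mor_id)
next
  case (Suc k)
  have "mpow C (Ob n) (Suc k) (tcyc Mor n) = cmp C (Mor n n (tau n)) (Mor n n (\<lambda>v. v + int k))"
    using Suc by (simp add: mpow_Suc tcyc_def)
  also have "\<dots> = Mor n n ((\<lambda>v. v + int k) \<circ> tau n)"
    by (rule Mor_comp[OF lam_plus_tau lam_plus_shift])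
  also have "(\<lambda>v. v + int k) \<circ> tau n = (\<lambda>v. v + int (Suc k))" by (auto simp: tau_eq fun_eq_iff)
  finally show ?case .
qed

lemma pop_expand:
  "pop C Ob Mor n = lsum (Ob n) (Ob n) (map (\<lambda>c. sgnm C (cnt c) (Mor n n (Gm n 0 c))) (bl n))"
proof -
  have "pop C Ob Mor n = foldr (\<lambda>x acc. cmp C (mns C ((\<lambda>_. idm C (Ob n)) x) ((\<lambda>i. cmp C (sdeg Mor (n - 1) i) (dface Mor n (Suc i))) x)) acc) [0..<n] (idm C (Ob n))"
    unfolding pop_def pfac_def by simp
  also have "\<dots> = lsum (Ob n) (Ob n) (map (\<lambda>c. sgnm C (cnt c) (PrL (Ob n) (\<lambda>_. idm C (Ob n)) (\<lambda>i. cmp C (sdeg Mor (n - 1) i) (dface Mor n (Suc i))) [0..<n] c)) (bl (length [0..<n])))"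
  proof (rule foldr_expand)
    fix x assume "x \<in> set [0..<n]"
    then have x: "x < n" by simp
    then have n0: "0 < n" by simp
    show "idm C (Ob n) \<in> hom C (Ob n) (Ob n) \<and> cmp C (sdeg Mor (n - 1) x) (dface Mor n (Suc x)) \<in> hom C (Ob n) (Ob n)"
      using E3[OF x] Mor_hom[OF lam_plus_emap[OF n0]] by simp
  qed
  also have "\<dots> = lsum (Ob n) (Ob n) (map (\<lambda>c. sgnm C (cnt c) (Mor n n (Gm n 0 c))) (bl n))"
    using PrL_eq[of _ 0 n] bl_length[of _ n] by (auto intro!: arg_cong[where f="lsum (Ob n) (Ob n)"])
  finally show ?thesis .
qed

lemma Gm_hom: "Mor n n (Gm n 0 c) \<in> hom C (Ob n) (Ob n)" if "length c = n"
proof (cases "n = 0")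
  case True then have "c = []" using that by simp
  then show ?thesis using Mor_hom[OF lam_plus_id[of n]] by simp
next
  case False then show ?thesis using Mor_hom[OF lam_plus_Gm] by simp
qed

lemma lam_plus_Gm': "length c = n \<Longrightarrow> lam_plus n n (Gm n 0 c)"
  by (cases "n = 0") (auto intro: lam_plus_Gm simp: lam_plus_id)

lemma Ls_hom: "x \<in> set (map (\<lambda>c. sgnm C (cnt c) (Mor n n (Gm n 0 c))) (bl n)) \<Longrightarrow> x \<in> hom C (Ob n) (Ob n)"
proof -
  assume "x \<in> set (map (\<lambda>c. sgnm C (cnt c) (Mor n n (Gm n 0 c))) (bl n))"
  then obtain c where c: "c \<in> set (bl n)" "x = sgnm C (cnt c) (Mor n n (Gm n 0 c))" by auto
  show ?thesis unfolding c(2) by (rule sgnm_hom[OF Gm_hom[OF bl_length[OF c(1)]]])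
qed

lemma pop_hom: "pop C Ob Mor n \<in> hom C (Ob n) (Ob n)"
  unfolding pop_expand by (rule lsum_hom[OF Ls_hom])

lemma dk_expand:
  "dk C Ob Mor n = lsum (Ob n) (Ob n) (map (\<lambda>c. sgnm C (cnt c) (Mor n n (eta n (Suc n) \<circ> xsm n c \<circ> eps (Suc n) 0))) (bl n))"
proof -
  let ?d0 = "dface Mor (Suc n) 0" and ?s = "sdeg Mor n (Suc n)"
  have d0: "?d0 = Mor n (Suc n) (eps (Suc n) 0)" by (simp add: dface_def)
  have s: "?s = Mor (Suc n) n (eta n (Suc n))" by (simp add: sdeg_def)
  have d0h: "?d0 \<in> hom C (Ob (Suc n)) (Ob n)" unfolding d0 by (rule Mor_hom[OF lam_plus_eps_Suc])
  have sh: "?s \<in> hom C (Ob n) (Ob (Suc n))" unfolding s by (rule Mor_hom[OF lam_plus_eta_Suc])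
  have F: "mns C (AA n) (BB n) \<in> hom C (Ob (Suc n)) (Ob (Suc n))"
    using AA_hom BB_hom by (auto simp: mns_def)
  define Y where "Y = mpow C (Ob (Suc n)) n (mns C (AA n) (BB n))"
  have Yh: "Y \<in> hom C (Ob (Suc n)) (Ob (Suc n))" unfolding Y_def using F by (rule mpow_hom)
  have ev: "even (Suc n * n)" by simp
  have "mpow C (Ob (Suc n)) n (kar C Ob Mor (Suc n)) = sgnm C (Suc n * n) (mpow C (Ob (Suc n)) n (mns C (BB n) (AA n)))"
    unfolding kar_eq using mpow_sgnm[of "mns C (BB n) (AA n)" "Ob (Suc n)" n "Suc n"] AA_hom BB_hom
    by (auto simp: mns_def)
  also have "\<dots> = mpow C (Ob (Suc n)) n (mns C (BB n) (AA n))" using ev by (simp add: sgnm_def)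
  also have "\<dots> = sgnm C n Y" unfolding Y_def
    using mns_swap[OF BB_hom AA_hom] mpow_neg[OF F] by simp
  finally have K: "mpow C (Ob (Suc n)) n (kar C Ob Mor (Suc n)) = sgnm C n Y" .
  have "dk C Ob Mor n = sgnm C n (cmp C ?d0 (cmp C (sgnm C n Y) ?s))"
    unfolding dk_def using K by simp
  also have "\<dots> = sgnm C n (sgnm C n (cmp C ?d0 (cmp C Y ?s)))"
    using cmp_sgnm_l[OF Yh sh] cmp_sgnm_r[OF cmp_hom[OF sh Yh] d0h] by simp
  also have "\<dots> = cmp C ?d0 (cmp C Y ?s)"
    using sgnm_add[OF cmp_hom[OF cmp_hom[OF sh Yh] d0h], of n n] by (simp add: sgnm_def)
  also have "\<dots> = lsum (Ob n) (Ob n) (map (\<lambda>c. sgnm C (cnt c) (cmp C ?d0 (cmp C (PrR (Ob (Suc n)) (AA n) (BB n) c) ?s))) (bl n))"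
  proof -
    have Ls: "\<And>x. x \<in> set (map (\<lambda>c. sgnm C (cnt c) (PrR (Ob (Suc n)) (AA n) (BB n) c)) (bl n)) \<Longrightarrow> x \<in> hom C (Ob (Suc n)) (Ob (Suc n))"
      using AA_hom BB_hom by auto
    have Y2: "Y = lsum (Ob (Suc n)) (Ob (Suc n)) (map (\<lambda>c. sgnm C (cnt c) (PrR (Ob (Suc n)) (AA n) (BB n) c)) (bl n))"
      unfolding Y_def by (rule mpow_expand[OF AA_hom BB_hom])
    have "cmp C Y ?s = lsum (Ob n) (Ob (Suc n)) (map (\<lambda>x. cmp C x ?s) (map (\<lambda>c. sgnm C (cnt c) (PrR (Ob (Suc n)) (AA n) (BB n) c)) (bl n)))"
      unfolding Y2 by (rule cmp_lsum_r[OF sh Ls])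
    also have "\<dots> = lsum (Ob n) (Ob (Suc n)) (map (\<lambda>c. sgnm C (cnt c) (cmp C (PrR (Ob (Suc n)) (AA n) (BB n) c) ?s)) (bl n))"
      using cmp_sgnm_l[OF PrR_hom[OF AA_hom BB_hom] sh] by (simp add: comp_def)
    finally have "cmp C ?d0 (cmp C Y ?s) = cmp C ?d0 (lsum (Ob n) (Ob (Suc n)) (map (\<lambda>c. sgnm C (cnt c) (cmp C (PrR (Ob (Suc n)) (AA n) (BB n) c) ?s)) (bl n)))" by simp
    also have "\<dots> = lsum (Ob n) (Ob n) (map (cmp C ?d0) (map (\<lambda>c. sgnm C (cnt c) (cmp C (PrR (Ob (Suc n)) (AA n) (BB n) c) ?s)) (bl n)))"
      by (rule cmp_lsum_l[OF d0h]) (use cmp_hom[OF sh PrR_hom[OF AA_hom BB_hom]] in auto)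
    also have "\<dots> = lsum (Ob n) (Ob n) (map (\<lambda>c. sgnm C (cnt c) (cmp C ?d0 (cmp C (PrR (Ob (Suc n)) (AA n) (BB n) c) ?s))) (bl n))"
      using cmp_sgnm_r[OF cmp_hom[OF sh PrR_hom[OF AA_hom BB_hom]] d0h] by (simp add: comp_def)
    finally show ?thesis .
  qed
  also have "\<dots> = lsum (Ob n) (Ob n) (map (\<lambda>c. sgnm C (cnt c) (Mor n n (eta n (Suc n) \<circ> xsm n c \<circ> eps (Suc n) 0))) (bl n))"
  proof -
    have "cmp C ?d0 (cmp C (PrR (Ob (Suc n)) (AA n) (BB n) c) ?s) = Mor n n (eta n (Suc n) \<circ> xsm n c \<circ> eps (Suc n) 0)" for c
    proof -
      have "cmp C (PrR (Ob (Suc n)) (AA n) (BB n) c) ?s = Mor (Suc n) n (eta n (Suc n) \<circ> xsm n c)"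
        unfolding PrR_eq s by (rule Mor_comp[OF lam_plus_xsm lam_plus_eta_Suc])
      moreover have "cmp C ?d0 (Mor (Suc n) n (eta n (Suc n) \<circ> xsm n c)) = Mor n n (eta n (Suc n) \<circ> xsm n c \<circ> eps (Suc n) 0)"
        unfolding d0 using Mor_comp[OF lam_plus_eps_Suc lam_plus_comp[OF lam_plus_xsm lam_plus_eta_Suc]] by simp
      ultimately show ?thesis by simp
    qed
    then show ?thesis by simp
  qed
  finally show ?thesis .
qed

lemma main_n:
  "dk C Ob Mor n = cmp C (pop C Ob Mor n) (Tcyc C Ob Mor n)
   \<and> dk C Ob Mor n = cmp C (Tcyc C Ob Mor n) (pop C Ob Mor n)"
proof -
  let ?T = "Mor n n (\<lambda>v. v + int (Suc n))"
  have T: "Tcyc C Ob Mor n = ?T" unfolding Tcyc_def using Tcyc_eq[of n "Suc n"] by simp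
  have Th: "?T \<in> hom C (Ob n) (Ob n)" by (rule Mor_hom[OF lam_plus_shift])
  have Ls: "\<And>x. x \<in> set (map (\<lambda>c. sgnm C (cnt c) (Mor n n (Gm n 0 c))) (bl n)) \<Longrightarrow> x \<in> hom C (Ob n) (Ob n)"
    by (rule Ls_hom)
  have "cmp C (pop C Ob Mor n) ?T = lsum (Ob n) (Ob n) (map (\<lambda>x. cmp C x ?T) (map (\<lambda>c. sgnm C (cnt c) (Mor n n (Gm n 0 c))) (bl n)))"
    unfolding pop_expand by (rule cmp_lsum_r[OF Th Ls])
  also have "\<dots> = lsum (Ob n) (Ob n) (map (\<lambda>c. sgnm C (cnt c) (Mor n n (eta n (Suc n) \<circ> xsm n c \<circ> eps (Suc n) 0))) (bl n))"
  proof -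
    have "cmp C (sgnm C (cnt c) (Mor n n (Gm n 0 c))) ?T = sgnm C (cnt c) (Mor n n (eta n (Suc n) \<circ> xsm n c \<circ> eps (Suc n) 0))"
      if "c \<in> set (bl n)" for c
    proof -
      have lc: "length c = n" using bl_length[OF that] .
      have "cmp C (Mor n n (Gm n 0 c)) ?T = Mor n n ((\<lambda>v. v + int (Suc n)) \<circ> Gm n 0 c)"
        by (rule Mor_comp[OF lam_plus_Gm'[OF lc] lam_plus_shift])
      then show ?thesis using cmp_sgnm_l[OF Gm_hom[OF lc] Th] key_map_eq[OF lc] by simp
    qed
    then show ?thesis by (simp cong: map_cong)
  qed
  also have "\<dots> = dk C Ob Mor n" by (rule dk_expand[symmetric])
  finally have A: "dk C Ob Mor n = cmp C (pop C Ob Mor n) (Tcyc C Ob Mor n)" using T by simp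
  have "cmp C ?T (pop C Ob Mor n) = lsum (Ob n) (Ob n) (map (cmp C ?T) (map (\<lambda>c. sgnm C (cnt c) (Mor n n (Gm n 0 c))) (bl n)))"
    unfolding pop_expand by (rule cmp_lsum_l[OF Th Ls])
  also have "\<dots> = lsum (Ob n) (Ob n) (map (\<lambda>x. cmp C x ?T) (map (\<lambda>c. sgnm C (cnt c) (Mor n n (Gm n 0 c))) (bl n)))"
  proof -
    have "cmp C ?T (sgnm C (cnt c) (Mor n n (Gm n 0 c))) = cmp C (sgnm C (cnt c) (Mor n n (Gm n 0 c))) ?T"
      if "c \<in> set (bl n)" for c
    proof -
      have lc: "length c = n" using bl_length[OF that] .
      have lG: "lam_plus n n (Gm n 0 c)" by (rule lam_plus_Gm'[OF lc])
      have comm: "Gm n 0 c \<circ> (\<lambda>v. v + int (Suc n)) = (\<lambda>v. v + int (Suc n)) \<circ> Gm n 0 c"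
      proof (rule ext)
        fix x
        have per: "\<And>x. Gm n 0 c (x + int n + 1) = Gm n 0 c x + int n + 1" using lG by (simp add: lam_plus_def lam_inf_def)
        have sh: "\<And>y. y + int (Suc n) = y + int n + 1" by simp
        show "(Gm n 0 c \<circ> (\<lambda>v. v + int (Suc n))) x = ((\<lambda>v. v + int (Suc n)) \<circ> Gm n 0 c) x"
          by (simp only: comp_apply sh per)
      qed
      have "cmp C ?T (Mor n n (Gm n 0 c)) = Mor n n (Gm n 0 c \<circ> (\<lambda>v. v + int (Suc n)))"
        by (rule Mor_comp[OF lam_plus_shift lG])
      also have "\<dots> = cmp C (Mor n n (Gm n 0 c)) ?T"
        unfolding comm by (rule Mor_comp[OF lG lam_plus_shift, symmetric])
      finally show ?thesis using cmp_sgnm_l[OF Gm_hom[OF lc] Th] cmp_sgnm_r[OF Gm_hom[OF lc] Th] by simp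
    qed
    then show ?thesis by (simp cong: map_cong)
  qed
  also have "\<dots> = cmp C (pop C Ob Mor n) ?T"
    unfolding pop_expand by (rule cmp_lsum_r[OF Th Ls, symmetric])
  finally show ?thesis using A T by simp
qed

end

theorem mainTheorem2:
  fixes C :: "('o, 'm) preadd_cat"
    and Ob :: "nat \<Rightarrow> 'o"
    and Mor :: "nat \<Rightarrow> nat \<Rightarrow> (int \<Rightarrow> int) \<Rightarrow> 'm"
  assumes "preadditive C"
    and "duplicial C Ob Mor"
  shows "(\<forall>n. dk C Ob Mor n = cmp C (pop C Ob Mor n) (Tcyc C Ob Mor n)
            \<and> dk C Ob Mor n = cmp C (Tcyc C Ob Mor n) (pop C Ob Mor n))
         \<and> (cyclic C Ob Mor \<longrightarrow> (\<forall>n. dk C Ob Mor n = pop C Ob Mor n))"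
proof -
  interpret dupl C Ob Mor using assms by (unfold_locales) auto
  have A: "\<forall>n. dk C Ob Mor n = cmp C (pop C Ob Mor n) (Tcyc C Ob Mor n)
            \<and> dk C Ob Mor n = cmp C (Tcyc C Ob Mor n) (pop C Ob Mor n)"
    using main_n by blast
  moreover have "cyclic C Ob Mor \<longrightarrow> (\<forall>n. dk C Ob Mor n = pop C Ob Mor n)"
  proof (intro impI allI)
    fix n assume "cyclic C Ob Mor"
    then have "Tcyc C Ob Mor n = idm C (Ob n)" by (simp add: cyclic_def)
    then show "dk C Ob Mor n = pop C Ob Mor n" using A pop_hom[of n] by simp
  qed
  ultimately show ?thesis by blast
qed

end
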